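(* In the linear deterministic diamond network with a disturbing node with gains $n_1,n_2,n_3,n_4,m$, suppose $n_1>n_2$, $n_3\ge n_4$ and $m\ge n_1$. Then the linear capacity is $C=\min(n_1,n_4)$.
   Context: The shift matrix $Q$ is the $q\times q$ matrix over $\mathbb{F}_2$ with $Q_{i+1,i}=1$ for $1\le i\le q-1$ and all other entries $0$, where $q=\max(n_1,n_2,n_3,n_4,m)$ and all gains are nonnegative integers. Network: source $S$, relays $A,B$, destination $D$, disturbing node $M$; gains $n_1$ ($S\to A$), $n_2$ ($S\to B$), $n_3$ ($A\to D$), $n_4$ ($B\to D$), $m$ ($M\to A$ and $M\to B$). Each node transmits $x_i\in\mathbb{F}_2^q$ and receives $y_j=\sum_{k:(k,j)\text{ an edge}}Q^{q-n_{(k,j)}}x_k$; relays use linear maps $x_A=G_Ay_A$, $x_B=G_By_B$ with $G_A,G_B$ arbitrary $q\times q$ matrices over $\mathbb{F}_2$. Then $y_D=G_Sx_S+G_Mx_M$ with $G_S=Q^{q-n_3}G_AQ^{q-n_1}+Q^{q-n_4}G_BQ^{q-n_2}$ and $G_M=Q^{q-n_3}G_AQ^{q-m}+Q^{q-n_4}G_BQ^{q-m}$. The rate $R(G_A,G_B)$ is the maximum dimension of a subspace $\mathcal{X}\subseteq\mathbb{F}_2^q$ such that for all $x_S,x_S'\in\mathcal{X}$, $x_M,x_M'\in\mathbb{F}_2^q$, $G_Sx_S+G_Mx_M=G_Sx_S'+G_Mx_M'$ implies $x_S=x_S'$. The linear capacity is $C=\max_{G_A,G_B}R(G_A,G_B)$.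 *)

theory Defs
  imports "Jordan_Normal_Form.VS_Connect" "HOL-Library.Z2"
begin

text \<open>Linear deterministic diamond network with a disturbing node, over GF(2)
  (the type bit). Vectors are 0-indexed: entry i of the paper is entry i-1 here.\<close>

definition net_q :: "nat \<Rightarrow> nat \<Rightarrow> nat \<Rightarrow> nat \<Rightarrow> nat \<Rightarrow> nat" where
  "net_q n1 n2 n3 n4 m = Max {n1, n2, n3, n4, m}"

definition shiftQ :: "nat \<Rightarrow> bit mat" where
  "shiftQ q = mat q q (\<lambda>(i, j). if i = j + 1 then 1 else 0)"

definition QP :: "nat \<Rightarrow> nat \<Rightarrow> bit mat" where
  "QP q k = shiftQ q ^\<^sub>m k"

definition G_S :: "nat \<Rightarrow> nat \<Rightarrow> nat \<Rightarrow> nat \<Rightarrow> nat \<Rightarrow> bit mat \<Rightarrow> bit mat \<Rightarrow> bit mat" where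
  "G_S n1 n2 n3 n4 m GA GB = (let q = net_q n1 n2 n3 n4 m in
     QP q (q - n3) * GA * QP q (q - n1) + QP q (q - n4) * GB * QP q (q - n2))"

definition G_M :: "nat \<Rightarrow> nat \<Rightarrow> nat \<Rightarrow> nat \<Rightarrow> nat \<Rightarrow> bit mat \<Rightarrow> bit mat \<Rightarrow> bit mat" where
  "G_M n1 n2 n3 n4 m GA GB = (let q = net_q n1 n2 n3 n4 m in
     QP q (q - n3) * GA * QP q (q - m) + QP q (q - n4) * GB * QP q (q - m))"

definition good_subspace :: "nat \<Rightarrow> nat \<Rightarrow> nat \<Rightarrow> nat \<Rightarrow> nat \<Rightarrow> bit mat \<Rightarrow> bit mat \<Rightarrow> bit vec set \<Rightarrow> nat \<Rightarrow> bool" where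
  "good_subspace n1 n2 n3 n4 m GA GB X d = (let q = net_q n1 n2 n3 n4 m;
       V = module_vec TYPE(bit) q; GS = G_S n1 n2 n3 n4 m GA GB; GM = G_M n1 n2 n3 n4 m GA GB in
     subspace class_ring X V \<and>
     vectorspace.dim class_ring (V\<lparr>carrier := X\<rparr>) = d \<and>
     (\<forall>xs \<in> X. \<forall>xs' \<in> X. \<forall>xm \<in> carrier_vec q. \<forall>xm' \<in> carrier_vec q.
        GS *\<^sub>v xs + GM *\<^sub>v xm = GS *\<^sub>v xs' + GM *\<^sub>v xm' \<longrightarrow> xs = xs'))"

definition rate :: "nat \<Rightarrow> nat \<Rightarrow> nat \<Rightarrow> nat \<Rightarrow> nat \<Rightarrow> bit mat \<Rightarrow> bit mat \<Rightarrow> nat" where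
  "rate n1 n2 n3 n4 m GA GB = Max {d. \<exists>X. good_subspace n1 n2 n3 n4 m GA GB X d}"

definition linear_capacity :: "nat \<Rightarrow> nat \<Rightarrow> nat \<Rightarrow> nat \<Rightarrow> nat \<Rightarrow> nat" where
  "linear_capacity n1 n2 n3 n4 m = (let q = net_q n1 n2 n3 n4 m in
     Max {rate n1 n2 n3 n4 m GA GB | GA GB. GA \<in> carrier_mat q q \<and> GB \<in> carrier_mat q q})"

end

theory Submission
  imports Defs "Jordan_Normal_Form.DL_Rank"
begin


lemma bit_cases2: "(b::bit) = 0 \<or> b = 1" by (metis bit_not_zero_iff)
lemma bit_add_self[simp]: "(b::bit) + b = 0" using bit_cases2[of b] by auto

lemma finite_bit_UNIV: "finite (UNIV :: bit set)"
proof -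
  have e: "(UNIV :: bit set) = {0,1}" using bit_cases2 by auto
  have "finite ({0,1} :: bit set)" by simp
  then show ?thesis by (simp only: e)
qed

lemma finite_carrier_vec_bit: "finite (carrier_vec n :: bit vec set)"
proof -
  have "carrier_vec n \<subseteq> vec_of_list ` {xs :: bit list. length xs = n}"
  proof
    fix v :: "bit vec" assume "v \<in> carrier_vec n"
    then show "v \<in> vec_of_list ` {xs. length xs = n}"
      by (intro image_eqI[of _ _ "list_of_vec v"]) (auto simp: vec_list)
  qed
  moreover have "finite {xs :: bit list. length xs = n}"
    using finite_lists_length_eq[OF finite_bit_UNIV, of n] by simp
  ultimately show ?thesis by (rule finite_subset[OF _ finite_imageI])
qed

lemma shiftQ_carrier[simp]: "shiftQ q \<in> carrier_mat q q" unfolding shiftQ_def by auto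
lemma shiftQ_dim[simp]: "dim_row (shiftQ q) = q" "dim_col (shiftQ q) = q" unfolding shiftQ_def by auto
lemma QP_carrier[simp]: "QP q s \<in> carrier_mat q q" unfolding QP_def by auto

lemma shiftQ_mult: assumes v: "v \<in> carrier_vec q"
  shows "shiftQ q *\<^sub>v v = vec q (\<lambda>i. if 1 \<le> i then v $ (i - 1) else 0)"
proof (rule eq_vecI)
  fix i assume "i < dim_vec (vec q (\<lambda>i. if 1 \<le> i then v $ (i - 1) else 0))"
  then have i: "i < q" by simp
  have "(shiftQ q *\<^sub>v v) $ i = (\<Sum>j<q. (if i = j + 1 then 1 else 0) * v $ j)"
    using i v unfolding shiftQ_def by (simp only: index_mult_mat_vec scalar_prod_def dim_row_mat index_row dim_col_mat carrier_vecD index_mat split atLeast0LessThan) (intro sum.cong, auto)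
  also have "\<dots> = (if 1 \<le> i then v $ (i - 1) else 0)"
  proof (cases "1 \<le> i")
    case True
    have "(\<Sum>j<q. (if i = j + 1 then 1 else 0) * v $ j) = (\<Sum>j\<in>{i-1}. (if i = j + 1 then 1 else 0) * v $ j)"
      using True i by (intro sum.mono_neutral_right) auto
    also have "\<dots> = v $ (i - 1)" using True by (subst sum.insert) auto
    finally show ?thesis using True by simp
  next
    case False then show ?thesis by (simp only: if_False) (rule sum.neutral, auto)
  qed
  finally show "(shiftQ q *\<^sub>v v) $ i = vec q (\<lambda>i. if 1 \<le> i then v $ (i - 1) else 0) $ i" using i by simp
qed (use v in auto)

lemma QP_mult_aux: "\<forall>v \<in> carrier_vec q. QP q s *\<^sub>v v = vec q (\<lambda>i. if s \<le> i then v $ (i - s) else 0)"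
proof (induction s)
  case 0
  show ?case unfolding QP_def by (auto intro!: eq_vecI simp: carrier_vecD)
next
  case (Suc s)
  show ?case
  proof
    fix v :: "bit vec" assume v: "v \<in> carrier_vec q"
    have "QP q (Suc s) *\<^sub>v v = QP q s *\<^sub>v (shiftQ q *\<^sub>v v)"
      unfolding QP_def using v by (simp add: assoc_mult_mat_vec[of _ q q _ q])
    also have "\<dots> = vec q (\<lambda>i. if Suc s \<le> i then v $ (i - Suc s) else 0)"
      using v Suc by (simp add: shiftQ_mult) (auto intro!: eq_vecI)
    finally show "QP q (Suc s) *\<^sub>v v = vec q (\<lambda>i. if Suc s \<le> i then v $ (i - Suc s) else 0)" .
  qed
qed

lemma QP_mult: "v \<in> carrier_vec q \<Longrightarrow> QP q s *\<^sub>v v = vec q (\<lambda>i. if s \<le> i then v $ (i - s) else 0)"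
  using QP_mult_aux by blast



lemma subspace_fin_dim:
  assumes sub: "subspace class_ring Y (module_vec TYPE(bit) n)"
  shows "vectorspace.fin_dim class_ring ((module_vec TYPE(bit) n)\<lparr>carrier := Y\<rparr>)"
proof -
  interpret VS: vec_space "TYPE(bit)" n .
  have vsY: "vectorspace class_ring (VS.vs Y)" using VS.subspace_is_vs[OF sub] .
  interpret Y: vectorspace class_ring "VS.vs Y" by (rule vsY)
  have Ysub: "Y \<subseteq> carrier_vec n" using sub unfolding subspace_def submodule_def by auto
  have fin: "finite Y" using finite_subset[OF Ysub finite_carrier_vec_bit] .
  have "Y.span Y = Y"
    using Y.span_is_subset2[of Y] Y.in_own_span[of Y] by auto
  then show ?thesis unfolding Y.fin_dim_def using fin by auto
qed

lemma dim_inj: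
  fixes X :: "bit vec set" and T :: "bit vec \<Rightarrow> bit vec"
  assumes sub: "subspace class_ring X (module_vec TYPE(bit) q)"
   and Tc: "\<And>x. x\<in>X \<Longrightarrow> T x \<in> carrier_vec k"
   and Tadd: "\<And>x y. x\<in>X \<Longrightarrow> y\<in>X \<Longrightarrow> T (x+y) = T x + T y"
   and Tsm: "\<And>c x. x\<in>X \<Longrightarrow> T (c \<cdot>\<^sub>v x) = c \<cdot>\<^sub>v T x"
   and inj: "inj_on T X"
  shows "vectorspace.dim class_ring ((module_vec TYPE(bit) q)\<lparr>carrier := X\<rparr>) \<le> k"
    and "T ` X = carrier_vec k \<Longrightarrow> vectorspace.dim class_ring ((module_vec TYPE(bit) q)\<lparr>carrier := X\<rparr>) = k"
proof -
  interpret VS: vec_space "TYPE(bit)" q .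
  interpret WS: vec_space "TYPE(bit)" k .
  have vsX: "vectorspace class_ring (VS.vs X)" using VS.subspace_is_vs[OF sub] .
  interpret X: vectorspace class_ring "VS.vs X" by (rule vsX)
  have lm: "linear_map class_ring (VS.vs X) (module_vec TYPE(bit) k) T"
    unfolding linear_map_def mod_hom_def mod_hom_axioms_def LinearCombinations.module_hom_def
    using vsX WS.vectorspace_axioms X.module_axioms WS.module_axioms Tc Tadd Tsm
    by (auto simp: module_vec_simps)
  interpret LM: linear_map class_ring "VS.vs X" "module_vec TYPE(bit) k" T by (rule lm)
  have fdX: "X.fin_dim" using subspace_fin_dim[OF sub] .
  have inj': "inj_on T (carrier (VS.vs X))" using inj by simp
  show "T ` X = carrier_vec k \<Longrightarrow> X.dim = k"
    using LM.dim_eq[OF fdX inj'] WS.dim_is_n by (simp add: module_vec_simps)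
  have rn: "vectorspace.dim class_ring (WS.vs LM.imT) + vectorspace.dim class_ring (X.vs LM.kerT) = X.dim"
    by (rule LM.rank_nullity[OF fdX])
  have k0: "vectorspace.dim class_ring (X.vs LM.kerT) = 0" by (rule LM.inj_imp_dim_ker0[OF inj'])
  have imsub: "subspace class_ring LM.imT (module_vec TYPE(bit) k)" by (rule LM.imT_is_subspace)
  have "vectorspace.dim class_ring (WS.vs LM.imT) \<le> WS.dim"
    by (rule WS.subspace_dim[OF imsub WS.fin_dim subspace_fin_dim[OF imsub]])
  then show "X.dim \<le> k" using rn k0 WS.dim_is_n by simp
qed



lemma bit_swap: "(a::bit) + b = c + d \<Longrightarrow> a + d = c + b"
  using bit_cases2[of a] bit_cases2[of b] bit_cases2[of c] bit_cases2[of d] by auto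

lemma net_q_ge: "n1 \<le> net_q n1 n2 n3 n4 m" "n2 \<le> net_q n1 n2 n3 n4 m" "n3 \<le> net_q n1 n2 n3 n4 m"
  "n4 \<le> net_q n1 n2 n3 n4 m" "m \<le> net_q n1 n2 n3 n4 m"
  unfolding net_q_def by auto

lemma QP_dim[simp]: "dim_row (QP q s) = q" "dim_col (QP q s) = q"
  using carrier_matD[OF QP_carrier[of q s]] by auto

lemma QP_mult_carrier[simp]: "v \<in> carrier_vec q \<Longrightarrow> QP q s *\<^sub>v v \<in> carrier_vec q"
  using QP_carrier by (rule mult_mat_vec_carrier)

lemma QP_comp: assumes v: "v \<in> carrier_vec q"
  shows "QP q a *\<^sub>v (QP q b *\<^sub>v v) = QP q (a + b) *\<^sub>v v"
  using v by (simp add: QP_mult) (auto intro!: eq_vecI simp: diff_diff_left)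

lemma triple_mult:
  assumes "P \<in> carrier_mat q q" "A \<in> carrier_mat q q" "R \<in> carrier_mat q q" "x \<in> carrier_vec q"
  shows "(P * A * R) *\<^sub>v x = P *\<^sub>v (A *\<^sub>v (R *\<^sub>v x))"
proof -
  have "(P * A * R) *\<^sub>v x = (P * A) *\<^sub>v (R *\<^sub>v x)"
    using assms by (intro assoc_mult_mat_vec[of _ q q _ q]) auto
  also have "\<dots> = P *\<^sub>v (A *\<^sub>v (R *\<^sub>v x))"
    using assms by (intro assoc_mult_mat_vec[of _ q q _ q]) auto
  finally show ?thesis .
qed

lemma GS_mult:
  assumes GA: "GA \<in> carrier_mat q q" and GB: "GB \<in> carrier_mat q q" and x: "x \<in> carrier_vec q"
    and q: "q = net_q n1 n2 n3 n4 m"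
  shows "G_S n1 n2 n3 n4 m GA GB *\<^sub>v x = QP q (q-n3) *\<^sub>v (GA *\<^sub>v (QP q (q-n1) *\<^sub>v x))
           + QP q (q-n4) *\<^sub>v (GB *\<^sub>v (QP q (q-n2) *\<^sub>v x))"
proof -
  have "G_S n1 n2 n3 n4 m GA GB = QP q (q - n3) * GA * QP q (q - n1) + QP q (q - n4) * GB * QP q (q - n2)"
    unfolding G_S_def Let_def q[symmetric] ..
  moreover have "(QP q (q - n3) * GA * QP q (q - n1) + QP q (q - n4) * GB * QP q (q - n2)) *\<^sub>v x
     = (QP q (q - n3) * GA * QP q (q - n1)) *\<^sub>v x + (QP q (q - n4) * GB * QP q (q - n2)) *\<^sub>v x"
    by (rule add_mult_distrib_mat_vec[of _ q q]) (use GA GB x in \<open>auto intro!: mult_carrier_mat[of _ q q _ q]\<close>)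
  ultimately show ?thesis using GA GB x by (simp add: triple_mult[of _ q])
qed

lemma GM_mult:
  assumes GA: "GA \<in> carrier_mat q q" and GB: "GB \<in> carrier_mat q q" and x: "x \<in> carrier_vec q"
    and q: "q = net_q n1 n2 n3 n4 m"
  shows "G_M n1 n2 n3 n4 m GA GB *\<^sub>v x = QP q (q-n3) *\<^sub>v (GA *\<^sub>v (QP q (q-m) *\<^sub>v x))
           + QP q (q-n4) *\<^sub>v (GB *\<^sub>v (QP q (q-m) *\<^sub>v x))"
proof -
  have "G_M n1 n2 n3 n4 m GA GB = QP q (q - n3) * GA * QP q (q - m) + QP q (q - n4) * GB * QP q (q - m)"
    unfolding G_M_def Let_def q[symmetric] ..
  moreover have "(QP q (q - n3) * GA * QP q (q - m) + QP q (q - n4) * GB * QP q (q - m)) *\<^sub>v x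
     = (QP q (q - n3) * GA * QP q (q - m)) *\<^sub>v x + (QP q (q - n4) * GB * QP q (q - m)) *\<^sub>v x"
    by (rule add_mult_distrib_mat_vec[of _ q q]) (use GA GB x in \<open>auto intro!: mult_carrier_mat[of _ q q _ q]\<close>)
  ultimately show ?thesis using GA GB x by (simp add: triple_mult[of _ q])
qed

definition Tr :: "nat \<Rightarrow> nat \<Rightarrow> bit mat" where
  "Tr k q = mat k q (\<lambda>(i,j). if i = j then 1 else 0)"

lemma Tr_carrier[simp]: "Tr k q \<in> carrier_mat k q" unfolding Tr_def by auto

lemma Tr_mult: assumes x: "x \<in> carrier_vec q" and i: "i < k" and kq: "k \<le> q"
  shows "(Tr k q *\<^sub>v x) $ i = x $ i"
proof -
  have "row (Tr k q) i = unit_vec q i" using i unfolding Tr_def unit_vec_def by (auto intro!: eq_vecI)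
  moreover have "(Tr k q *\<^sub>v x) $ i = row (Tr k q) i \<bullet> x" using i by (simp add: Tr_def)
  ultimately show ?thesis using i x kq by (simp add: scalar_prod_left_unit[of _ q])
qed

lemma mat_lin3:
  fixes A :: "bit mat"
  assumes A: "A \<in> carrier_mat k q" and x: "x \<in> carrier_vec q"
  shows "A *\<^sub>v (c \<cdot>\<^sub>v x) = c \<cdot>\<^sub>v (A *\<^sub>v x)"
  by (rule mult_mat_vec[OF A x])

lemma mat_lin2:
  assumes A: "A \<in> carrier_mat k q" and x: "x \<in> carrier_vec q" and y: "y \<in> carrier_vec q"
  shows "A *\<^sub>v (x + y) = A *\<^sub>v x + A *\<^sub>v y"
  by (rule mult_add_distrib_mat_vec[OF A x y])



lemma QP_eq:
  assumes x: "x \<in> carrier_vec q" and y: "y \<in> carrier_vec q" and h: "\<And>i. i + s < q \<Longrightarrow> x $ i = y $ i"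
  shows "QP q s *\<^sub>v x = QP q s *\<^sub>v y"
  using x y h by (simp add: QP_mult) (auto intro!: eq_vecI)

lemma bit_rearr: "(B::bit) + D = E + F \<Longrightarrow> A + B + (C + D) = C + E + (A + F)"
proof -
  assume h: "B + D = E + F"
  have "A + B + (C + D) = (A + C) + (B + D)" by (simp only: ac_simps)
  also have "\<dots> = (A + C) + (E + F)" using h by simp
  also have "\<dots> = C + E + (A + F)" by (simp only: ac_simps)
  finally show ?thesis .
qed

lemma good_unfold:
  assumes good: "good_subspace n1 n2 n3 n4 m GA GB X d" and q: "q = net_q n1 n2 n3 n4 m"
  shows "subspace class_ring X (module_vec TYPE(bit) q)"
    "vectorspace.dim class_ring ((module_vec TYPE(bit) q)\<lparr>carrier := X\<rparr>) = d"
    "\<And>xs xs' xm xm'. xs \<in> X \<Longrightarrow> xs' \<in> X \<Longrightarrow> xm \<in> carrier_vec q \<Longrightarrow> xm' \<in> carrier_vec q \<Longrightarrow>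
       G_S n1 n2 n3 n4 m GA GB *\<^sub>v xs + G_M n1 n2 n3 n4 m GA GB *\<^sub>v xm =
       G_S n1 n2 n3 n4 m GA GB *\<^sub>v xs' + G_M n1 n2 n3 n4 m GA GB *\<^sub>v xm' \<Longrightarrow> xs = xs'"
  using good unfolding good_subspace_def Let_def q[symmetric] by auto

lemma subspace_carrier: "subspace class_ring X (module_vec TYPE(bit) q) \<Longrightarrow> X \<subseteq> carrier_vec q"
  unfolding subspace_def submodule_def by (auto simp: module_vec_simps)

lemma good_le_n1:
  fixes GA GB :: "bit mat"
  assumes h: "n1 > n2" and q: "q = net_q n1 n2 n3 n4 m"
    and GA: "GA \<in> carrier_mat q q" and GB: "GB \<in> carrier_mat q q"
    and good: "good_subspace n1 n2 n3 n4 m GA GB X d"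
  shows "d \<le> n1"
proof -
  note gu = good_unfold[OF good q]
  have Xc: "X \<subseteq> carrier_vec q" using subspace_carrier[OF gu(1)] .
  have n1q: "n1 \<le> q" using net_q_ge q by simp
  have inj: "inj_on (\<lambda>x. Tr n1 q *\<^sub>v x) X"
  proof (rule inj_onI)
    fix x y assume x: "x \<in> X" and y: "y \<in> X" and e: "Tr n1 q *\<^sub>v x = Tr n1 q *\<^sub>v y"
    have xc: "x \<in> carrier_vec q" and yc: "y \<in> carrier_vec q" using x y Xc by auto
    have co: "x $ i = y $ i" if "i < n1" for i
      using arg_cong[OF e, of "\<lambda>v. v $ i"] Tr_mult[OF xc that n1q] Tr_mult[OF yc that n1q] by simp
    have e1: "QP q (q - n1) *\<^sub>v x = QP q (q - n1) *\<^sub>v y"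
      by (rule QP_eq[OF xc yc]) (rule co, use n1q in simp)
    have e2: "QP q (q - n2) *\<^sub>v x = QP q (q - n2) *\<^sub>v y"
      by (rule QP_eq[OF xc yc]) (rule co, use n1q h in simp)
    have "G_S n1 n2 n3 n4 m GA GB *\<^sub>v x = G_S n1 n2 n3 n4 m GA GB *\<^sub>v y"
      using GS_mult[OF GA GB xc q] GS_mult[OF GA GB yc q] e1 e2 by simp
    then show "x = y" using gu(3)[OF x y, of "0\<^sub>v q" "0\<^sub>v q"] by simp
  qed
  have "vectorspace.dim class_ring ((module_vec TYPE(bit) q)\<lparr>carrier := X\<rparr>) \<le> n1"
    by (rule dim_inj(1)[OF gu(1) _ _ _ inj])
      (use Xc in \<open>auto intro!: mat_lin2[OF Tr_carrier] mat_lin3[OF Tr_carrier] mult_mat_vec_carrier[OF Tr_carrier]\<close>)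
  then show ?thesis using gu(2) by simp
qed

lemma good_le_n4:
  fixes GA GB :: "bit mat"
  assumes hm: "m \<ge> n1" and q: "q = net_q n1 n2 n3 n4 m"
    and GA: "GA \<in> carrier_mat q q" and GB: "GB \<in> carrier_mat q q"
    and good: "good_subspace n1 n2 n3 n4 m GA GB X d"
  shows "d \<le> n4"
proof -
  note gu = good_unfold[OF good q]
  have Xc: "X \<subseteq> carrier_vec q" using subspace_carrier[OF gu(1)] .
  have n4q: "n4 \<le> q" and mq: "m \<le> q" using net_q_ge q by simp_all
  define M where "M = Tr n4 q * (GB * (QP q (q - n2) + QP q (q - n1)))"
  have Mc: "M \<in> carrier_mat n4 q" unfolding M_def using GB by (intro mult_carrier_mat[of _ n4 q] mult_carrier_mat[of _ q q] add_carrier_mat) auto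
  have Mx: "M *\<^sub>v x = Tr n4 q *\<^sub>v (GB *\<^sub>v (QP q (q - n2) *\<^sub>v x) + GB *\<^sub>v (QP q (q - n1) *\<^sub>v x))"
    if x: "x \<in> carrier_vec q" for x
  proof -
    have "M *\<^sub>v x = Tr n4 q *\<^sub>v ((GB * (QP q (q - n2) + QP q (q - n1))) *\<^sub>v x)"
      unfolding M_def using GB x by (intro assoc_mult_mat_vec[of _ n4 q _ q]) auto
    also have "(GB * (QP q (q - n2) + QP q (q - n1))) *\<^sub>v x = GB *\<^sub>v ((QP q (q - n2) + QP q (q - n1)) *\<^sub>v x)"
      using GB x by (intro assoc_mult_mat_vec[of _ q q _ q]) auto
    also have "(QP q (q - n2) + QP q (q - n1)) *\<^sub>v x = QP q (q - n2) *\<^sub>v x + QP q (q - n1) *\<^sub>v x"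
      using x by (intro add_mult_distrib_mat_vec[of _ q q]) auto
    also have "GB *\<^sub>v (QP q (q - n2) *\<^sub>v x + QP q (q - n1) *\<^sub>v x) = GB *\<^sub>v (QP q (q - n2) *\<^sub>v x) + GB *\<^sub>v (QP q (q - n1) *\<^sub>v x)"
      using x GB by (intro mult_add_distrib_mat_vec[of _ q q]) auto
    finally show ?thesis .
  qed
  have inj: "inj_on (\<lambda>x. M *\<^sub>v x) X"
  proof (rule inj_onI)
    fix x y assume x: "x \<in> X" and y: "y \<in> X" and e: "M *\<^sub>v x = M *\<^sub>v y"
    have xc: "x \<in> carrier_vec q" and yc: "y \<in> carrier_vec q" using x y Xc by auto
    let ?a = "\<lambda>z. QP q (q-n3) *\<^sub>v (GA *\<^sub>v (QP q (q-n1) *\<^sub>v z))"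
    let ?b = "\<lambda>w. QP q (q-n4) *\<^sub>v (GB *\<^sub>v w)"
    have co: "(GB *\<^sub>v (QP q (q - n2) *\<^sub>v x)) $ j + (GB *\<^sub>v (QP q (q - n1) *\<^sub>v x)) $ j =
              (GB *\<^sub>v (QP q (q - n2) *\<^sub>v y)) $ j + (GB *\<^sub>v (QP q (q - n1) *\<^sub>v y)) $ j" if j: "j < n4" for j
    proof -
      have "(M *\<^sub>v x) $ j = (M *\<^sub>v y) $ j" using e by simp
      then show ?thesis unfolding Mx[OF xc] Mx[OF yc]
        using Tr_mult[OF _ j n4q] j n4q GB xc yc by simp
    qed
    have cmp: "QP q (q - m) *\<^sub>v (QP q (m - n1) *\<^sub>v z) = QP q (q - n1) *\<^sub>v z" if "z \<in> carrier_vec q" for z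
      using QP_comp[OF that] hm mq by simp
    have GMc: "G_M n1 n2 n3 n4 m GA GB *\<^sub>v (QP q (m - n1) *\<^sub>v z) = ?a z + ?b (QP q (q - n1) *\<^sub>v z)"
      if "z \<in> carrier_vec q" for z
      using GM_mult[OF GA GB _ q, of "QP q (m - n1) *\<^sub>v z"] cmp[OF that] that by simp
    have "G_S n1 n2 n3 n4 m GA GB *\<^sub>v x + G_M n1 n2 n3 n4 m GA GB *\<^sub>v (QP q (m - n1) *\<^sub>v y) =
          G_S n1 n2 n3 n4 m GA GB *\<^sub>v y + G_M n1 n2 n3 n4 m GA GB *\<^sub>v (QP q (m - n1) *\<^sub>v x)"
      unfolding GS_mult[OF GA GB xc q] GS_mult[OF GA GB yc q] GMc[OF xc] GMc[OF yc]
    proof (rule eq_vecI)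
      fix i assume "i < dim_vec (?a y + ?b (QP q (q - n2) *\<^sub>v y) + (?a x + ?b (QP q (q - n1) *\<^sub>v x)))"
      then have i: "i < q" by simp
      have bb: "(?b (QP q (q - n2) *\<^sub>v x)) $ i + (?b (QP q (q - n1) *\<^sub>v y)) $ i =
                (?b (QP q (q - n2) *\<^sub>v y)) $ i + (?b (QP q (q - n1) *\<^sub>v x)) $ i"
      proof (cases "q - n4 \<le> i")
        case True
        have j: "i - (q - n4) < n4" using i True n4q by simp
        show ?thesis using True i GB xc yc bit_swap[OF co[OF j]] by (simp add: QP_mult)
      next
        case False
        then show ?thesis using i GB xc yc by (simp add: QP_mult)
      qed
      show "(?a x + ?b (QP q (q - n2) *\<^sub>v x) + (?a y + ?b (QP q (q - n1) *\<^sub>v y))) $ i =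
            (?a y + ?b (QP q (q - n2) *\<^sub>v y) + (?a x + ?b (QP q (q - n1) *\<^sub>v x))) $ i"
        using i GA GB xc yc bit_rearr[OF bb] by simp
    qed (use GA GB xc yc in simp)
    then show "x = y" by (rule gu(3)[OF x y, rotated 2]) (use xc yc in simp_all)
  qed
  have "vectorspace.dim class_ring ((module_vec TYPE(bit) q)\<lparr>carrier := X\<rparr>) \<le> n4"
    by (rule dim_inj(1)[OF gu(1) _ _ _ inj])
      (use Xc in \<open>auto intro!: mat_lin2[OF Mc] mat_lin3[OF Mc] mult_mat_vec_carrier[OF Mc]\<close>)
  then show ?thesis using gu(2) by simp
qed



definition Pup :: "nat \<Rightarrow> nat \<Rightarrow> bit mat" where
  "Pup q s = mat q q (\<lambda>(i,j). if j = i + s then 1 else 0)"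

lemma Pup_carrier[simp]: "Pup q s \<in> carrier_mat q q" unfolding Pup_def by auto
lemma Pup_dim[simp]: "dim_row (Pup q s) = q" "dim_col (Pup q s) = q" unfolding Pup_def by auto
lemma Tr_dim[simp]: "dim_row (Tr k q) = k" "dim_col (Tr k q) = q" unfolding Tr_def by auto

lemma Pup_mult: assumes v: "v \<in> carrier_vec q"
  shows "Pup q s *\<^sub>v v = vec q (\<lambda>i. if i + s < q then v $ (i + s) else 0)"
proof (rule eq_vecI)
  fix i assume "i < dim_vec (vec q (\<lambda>i. if i + s < q then v $ (i + s) else 0))"
  then have i: "i < q" by simp
  have "(Pup q s *\<^sub>v v) $ i = (\<Sum>j<q. (if j = i + s then 1 else 0) * v $ j)"
    using i v unfolding Pup_def by (simp only: index_mult_mat_vec scalar_prod_def dim_row_mat index_row dim_col_mat carrier_vecD index_mat split atLeast0LessThan) (intro sum.cong, auto)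
  also have "\<dots> = (if i + s < q then v $ (i + s) else 0)"
  proof (cases "i + s < q")
    case True
    have "(\<Sum>j<q. (if j = i + s then 1 else 0) * v $ j) = (\<Sum>j\<in>{i+s}. (if j = i + s then 1 else 0) * v $ j)"
      using True i by (intro sum.mono_neutral_right) auto
    also have "\<dots> = v $ (i + s)" by (subst sum.insert) auto
    finally show ?thesis using True by simp
  next
    case False then show ?thesis by (simp only: if_False) (rule sum.neutral, auto)
  qed
  finally show "(Pup q s *\<^sub>v v) $ i = vec q (\<lambda>i. if i + s < q then v $ (i + s) else 0) $ i" using i by simp
qed (use v in auto)

definition Xk :: "nat \<Rightarrow> nat \<Rightarrow> bit vec set" where
  "Xk q k = {v \<in> carrier_vec q. \<forall>i<q. k \<le> i \<longrightarrow> v $ i = 0}"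

lemma Xk_subspace: "subspace class_ring (Xk q k) (module_vec TYPE(bit) q)"
proof -
  have vs: "vectorspace class_ring (module_vec TYPE(bit) q)" by (rule vec_vs)
  then show ?thesis
    unfolding subspace_def submodule_def Xk_def
    by (auto simp: module_vec_simps vectorspace_def)
qed

lemma Xk_dim: assumes kq: "k \<le> q"
  shows "vectorspace.dim class_ring ((module_vec TYPE(bit) q)\<lparr>carrier := Xk q k\<rparr>) = k"
proof -
  have Xc: "Xk q k \<subseteq> carrier_vec q" unfolding Xk_def by auto
  have inj: "inj_on (\<lambda>x. Tr k q *\<^sub>v x) (Xk q k)"
  proof (rule inj_onI)
    fix x y assume x: "x \<in> Xk q k" and y: "y \<in> Xk q k" and e: "Tr k q *\<^sub>v x = Tr k q *\<^sub>v y"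
    have xc: "x \<in> carrier_vec q" and yc: "y \<in> carrier_vec q" using x y Xc by auto
    have co: "x $ i = y $ i" if "i < k" for i
      using arg_cong[OF e, of "\<lambda>v. v $ i"] Tr_mult[OF xc that kq] Tr_mult[OF yc that kq] by simp
    show "x = y"
    proof (rule eq_vecI)
      fix i assume "i < dim_vec y"
      then have i: "i < q" using yc by simp
      show "x $ i = y $ i"
      proof (cases "i < k")
        case True then show ?thesis by (rule co)
      next
        case False then show ?thesis using x y i unfolding Xk_def by auto
      qed
    qed (use xc yc in simp)
  qed
  have surj: "(\<lambda>x. Tr k q *\<^sub>v x) ` Xk q k = carrier_vec k"
  proof
    show "(\<lambda>x. Tr k q *\<^sub>v x) ` Xk q k \<subseteq> carrier_vec k"
      using Xc by (auto intro!: mult_mat_vec_carrier[OF Tr_carrier])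
    show "carrier_vec k \<subseteq> (\<lambda>x. Tr k q *\<^sub>v x) ` Xk q k"
    proof
      fix y :: "bit vec" assume y: "y \<in> carrier_vec k"
      define x where "x = vec q (\<lambda>i. if i < k then y $ i else 0)"
      have xX: "x \<in> Xk q k" unfolding x_def Xk_def by auto
      have xc: "x \<in> carrier_vec q" unfolding x_def by simp
      have "Tr k q *\<^sub>v x = y"
      proof (rule eq_vecI)
        fix i assume "i < dim_vec y"
        then have i: "i < k" using y by simp
        show "(Tr k q *\<^sub>v x) $ i = y $ i" using Tr_mult[OF xc i kq] i kq unfolding x_def by simp
      qed (use y in simp)
      then show "y \<in> (\<lambda>x. Tr k q *\<^sub>v x) ` Xk q k" using xX by blast
    qed
  qed
  show ?thesis
    by (rule dim_inj(2)[OF Xk_subspace _ _ _ inj surj])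
      (use Xc in \<open>auto intro!: mat_lin2[OF Tr_carrier] mat_lin3[OF Tr_carrier] mult_mat_vec_carrier[OF Tr_carrier]\<close>)
qed



lemma Pup_mult_carrier[simp]: "v \<in> carrier_vec q \<Longrightarrow> Pup q s *\<^sub>v v \<in> carrier_vec q"
  using Pup_carrier by (rule mult_mat_vec_carrier)

lemma achieve:
  assumes h1: "n1 > n2" and h2: "n3 \<ge> n4" and h3: "m \<ge> n1" and q: "q = net_q n1 n2 n3 n4 m"
  shows "good_subspace n1 n2 n3 n4 m (QP q (n3 - n4) * Pup q (q - n1)) (Pup q (q - n1)) (Xk q (min n1 n4)) (min n1 n4)"
proof -
  let ?k = "min n1 n4"
  let ?P = "Pup q (q - n1)"
  let ?GA = "QP q (n3 - n4) * ?P"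
  let ?GS = "G_S n1 n2 n3 n4 m ?GA ?P"
  let ?GM = "G_M n1 n2 n3 n4 m ?GA ?P"
  have qge: "n1 \<le> q" "n2 \<le> q" "n3 \<le> q" "n4 \<le> q" "m \<le> q" using net_q_ge q by simp_all
  have GAc: "?GA \<in> carrier_mat q q" by (intro mult_carrier_mat[of _ q q]) auto
  have GAv: "?GA *\<^sub>v w = QP q (n3 - n4) *\<^sub>v (?P *\<^sub>v w)" if "w \<in> carrier_vec q" for w
    using that by (intro assoc_mult_mat_vec[of _ q q _ q]) auto
  have red: "QP q (q - n3) *\<^sub>v (?GA *\<^sub>v w) = QP q (q - n4) *\<^sub>v (?P *\<^sub>v w)" if "w \<in> carrier_vec q" for w
  proof -
    have "QP q (q - n3) *\<^sub>v (?GA *\<^sub>v w) = QP q (q - n3 + (n3 - n4)) *\<^sub>v (?P *\<^sub>v w)"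
      using GAv[OF that] QP_comp[of "?P *\<^sub>v w" q] that mult_mat_vec_carrier[OF Pup_carrier that] by simp
    also have "q - n3 + (n3 - n4) = q - n4" using qge h2 by simp
    finally show ?thesis .
  qed
  have GSv: "?GS *\<^sub>v x = QP q (q - n4) *\<^sub>v (?P *\<^sub>v (QP q (q - n1) *\<^sub>v x)) + QP q (q - n4) *\<^sub>v (?P *\<^sub>v (QP q (q - n2) *\<^sub>v x))"
    if "x \<in> carrier_vec q" for x
    using GS_mult[OF GAc Pup_carrier that q] red that by simp
  have GM0: "?GM *\<^sub>v x = 0\<^sub>v q" if "x \<in> carrier_vec q" for x
    using GM_mult[OF GAc Pup_carrier that q] red that by (auto intro!: eq_vecI)
  have GSform: "(?GS *\<^sub>v x) $ (j + (q - n4)) = x $ j + (if n1 - n2 \<le> j then x $ (j - (n1 - n2)) else 0)"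
    if x: "x \<in> carrier_vec q" and j: "j < ?k" for x j
  proof -
    have j1: "j < n1" and j4: "j < n4" using j by auto
    have a: "j + (q - n4) < q" using j4 qge by simp
    have b: "j + (q - n1) < q" using j1 qge by simp
    have c: "(q - n2 \<le> j + (q - n1)) = (n1 - n2 \<le> j)" using qge h1 by auto
    have d: "j + (q - n1) - (q - n2) = j - (n1 - n2)" using qge h1 by auto
    show ?thesis unfolding GSv[OF x] using a b c d x by (simp add: QP_mult Pup_mult)
  qed
  show ?thesis
    unfolding good_subspace_def Let_def q[symmetric]
  proof (intro conjI ballI impI)
    show "subspace class_ring (Xk q ?k) (module_vec TYPE(bit) q)" by (rule Xk_subspace)
    show "vectorspace.dim class_ring ((module_vec TYPE(bit) q)\<lparr>carrier := Xk q ?k\<rparr>) = ?k"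
      by (rule Xk_dim) (use qge in simp)
    fix xs xs' xm xm'
    assume xs: "xs \<in> Xk q ?k" and xs': "xs' \<in> Xk q ?k" and xm: "xm \<in> carrier_vec q" and xm': "xm' \<in> carrier_vec q"
      and e: "?GS *\<^sub>v xs + ?GM *\<^sub>v xm = ?GS *\<^sub>v xs' + ?GM *\<^sub>v xm'"
    have xsc: "xs \<in> carrier_vec q" and xsc': "xs' \<in> carrier_vec q" using xs xs' unfolding Xk_def by auto
    have GSc: "?GS *\<^sub>v x \<in> carrier_vec q" if "x \<in> carrier_vec q" for x
      unfolding GSv[OF that] using that by (intro add_carrier_vec) simp_all
    have e2: "?GS *\<^sub>v xs = ?GS *\<^sub>v xs'"
      using e GM0[OF xm] GM0[OF xm'] GSc[OF xsc] GSc[OF xsc'] by simp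
    have all: "xs $ j = xs' $ j" if "j < q" for j
      using that
    proof (induction j rule: less_induct)
      case (less j)
      show ?case
      proof (cases "j < ?k")
        case True
        have "(?GS *\<^sub>v xs) $ (j + (q - n4)) = (?GS *\<^sub>v xs') $ (j + (q - n4))" using e2 by simp
        then have eq: "xs $ j + (if n1 - n2 \<le> j then xs $ (j - (n1 - n2)) else 0) =
                   xs' $ j + (if n1 - n2 \<le> j then xs' $ (j - (n1 - n2)) else 0)"
          unfolding GSform[OF xsc True] GSform[OF xsc' True] .
        have "(if n1 - n2 \<le> j then xs $ (j - (n1 - n2)) else 0) = (if n1 - n2 \<le> j then xs' $ (j - (n1 - n2)) else 0)"
          using less.IH[of "j - (n1 - n2)"] less.prems h1 by auto
        then have "xs $ j + (if n1 - n2 \<le> j then xs' $ (j - (n1 - n2)) else 0) =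
                   xs' $ j + (if n1 - n2 \<le> j then xs' $ (j - (n1 - n2)) else 0)" using eq by (simp only:)
        then show ?thesis by (rule add_right_cancel[THEN iffD1])
      next
        case False
        then show ?thesis using xs xs' less.prems unfolding Xk_def by auto
      qed
    qed
    show "xs = xs'" by (rule eq_vecI) (use all xsc xsc' in auto)
  qed
qed



lemma good_zero:
  assumes q: "q = net_q n1 n2 n3 n4 m"
  shows "good_subspace n1 n2 n3 n4 m GA GB (Xk q 0) 0"
  unfolding good_subspace_def Let_def q[symmetric]
proof (intro conjI ballI impI)
  show "subspace class_ring (Xk q 0) (module_vec TYPE(bit) q)" by (rule Xk_subspace)
  show "vectorspace.dim class_ring ((module_vec TYPE(bit) q)\<lparr>carrier := Xk q 0\<rparr>) = 0"
    by (rule Xk_dim) simp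
  fix xs xs' assume "xs \<in> Xk q 0" "xs' \<in> Xk q 0"
  then show "xs = xs'" unfolding Xk_def by (auto intro!: eq_vecI)
qed

lemma rate_props:
  fixes GA GB :: "bit mat"
  assumes h1: "n1 > n2" and h3: "m \<ge> n1" and q: "q = net_q n1 n2 n3 n4 m"
    and GA: "GA \<in> carrier_mat q q" and GB: "GB \<in> carrier_mat q q"
  shows "rate n1 n2 n3 n4 m GA GB \<le> min n1 n4"
    "good_subspace n1 n2 n3 n4 m GA GB X (min n1 n4) \<Longrightarrow> rate n1 n2 n3 n4 m GA GB = min n1 n4"
proof -
  let ?S = "{d. \<exists>X. good_subspace n1 n2 n3 n4 m GA GB X d}"
  have bnd: "d \<le> min n1 n4" if "d \<in> ?S" for d
    using that good_le_n1[OF h1 q GA GB] good_le_n4[OF h3 q GA GB] by auto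
  have "?S \<subseteq> {..min n1 n4}"
  proof
    fix d assume d: "d \<in> ?S" show "d \<in> {..min n1 n4}" using bnd[OF d] by simp
  qed
  then have fin: "finite ?S" by (rule finite_subset) simp
  have ne: "0 \<in> ?S" using good_zero[OF q] by blast
  show le: "rate n1 n2 n3 n4 m GA GB \<le> min n1 n4"
    unfolding rate_def using fin ne bnd by (subst Max_le_iff) auto
  assume "good_subspace n1 n2 n3 n4 m GA GB X (min n1 n4)"
  then have "min n1 n4 \<in> ?S" by blast
  then have "min n1 n4 \<le> rate n1 n2 n3 n4 m GA GB" unfolding rate_def using fin by (rule Max_ge[rotated])
  then show "rate n1 n2 n3 n4 m GA GB = min n1 n4" using le by simp
qed

theorem mainTheorem5:
  fixes n1 n2 n3 n4 m :: nat
  assumes "n1 > n2" and "n3 \<ge> n4" and "m \<ge> n1"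
  shows "linear_capacity n1 n2 n3 n4 m = min n1 n4"
proof -
  define q where "q = net_q n1 n2 n3 n4 m"
  let ?R = "{rate n1 n2 n3 n4 m GA GB | GA GB. GA \<in> carrier_mat q q \<and> GB \<in> carrier_mat q q}"
  have bnd: "r \<le> min n1 n4" if "r \<in> ?R" for r
    using that rate_props(1)[OF assms(1) assms(3) q_def] by auto
  have "?R \<subseteq> {..min n1 n4}"
  proof
    fix d assume d: "d \<in> ?R" show "d \<in> {..min n1 n4}" using bnd[OF d] by simp
  qed
  then have fin: "finite ?R" by (rule finite_subset) simp
  let ?GA = "QP q (n3 - n4) * Pup q (q - n1)"
  let ?GB = "Pup q (q - n1)"
  have GAc: "?GA \<in> carrier_mat q q" by (intro mult_carrier_mat[of _ q q]) auto
  have "rate n1 n2 n3 n4 m ?GA ?GB = min n1 n4"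
    by (rule rate_props(2)[OF assms(1) assms(3) q_def GAc Pup_carrier achieve[OF assms q_def]])
  then have mem: "min n1 n4 \<in> ?R" using GAc Pup_carrier[of q "q - n1"] by (intro CollectI exI[of _ ?GA] exI[of _ ?GB]) simp
  have "Max ?R = min n1 n4"
  proof (rule antisym)
    show "Max ?R \<le> min n1 n4" by (rule Max.boundedI[OF fin]) (use mem in blast, rule bnd)
    show "min n1 n4 \<le> Max ?R" by (rule Max_ge[OF fin mem])
  qed
  then show ?thesis unfolding linear_capacity_def Let_def q_def by simp
qed

end
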